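(* Let $\bar{X}=\{x_0<x_1<x_2<\cdots\}$ and let $\overline{\mathrm{WCQSym}}\subseteq \mathbf{k}[[\bar X]]_{\tilde{\mathbb N}}$ be the free $\mathbf{k}$-module with basis $\{\bar M_{(\alpha_0,\alpha_1,\dots,\alpha_k)}\}$ indexed by the nonempty $\tilde{\mathbb N}$-compositions $(\alpha_0,\alpha_1,\dots,\alpha_k)$, where $\bar M_{(\alpha_0,\alpha)}:=x_0^{\alpha_0}M_\alpha$ (equivalently $\overline{\mathrm{WCQSym}}=x_0^{\varepsilon}\mathbf{k}[x_0]\,\mathrm{WCQSym}$). It is a subalgebra, with product $\bar M_{(\alpha_0,\alpha)}\bar M_{(\beta_0,\beta)}=\bar M_{(\alpha_0+\beta_0,\alpha*\beta)}$ (extended linearly in the second slot, with $(\gamma_0,\emptyset)=(\gamma_0)$). Let $\bar P$ be the $\mathbf{k}$-linear operator on $\overline{\mathrm{WCQSym}}$ with $\bar P(\bar M_{(\alpha_0,\alpha)})=\bar M_{(\varepsilon,\alpha_0,\alpha)}$. Then $(\overline{\mathrm{WCQSym}},\bar P)$ is the free commutative unitary Rota--Baxter algebra of weight $1$ generated by $x_0=\bar M_{(1)}$: it is a commutative unitary Rota--Baxter algebra of weight $1$ (with identity $\bar M_{(\varepsilon)}=x_0^{\varepsilon}$), and for every commutative unitary Rota--Baxter $\mathbf{k}$-algebra $(R,P)$ of weight $1$ and every $r\in R$ there is a unique unital Rota--Baxter algebra homomorphism $(\overline{\mathrm{WCQSym}},\bar P)\to(R,P)$ sending $x_0$ to $r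$.
   Context: $\mathbf{k}$ is a commutative ring containing $\mathbb{Q}$. $\tilde{\mathbb N}=\mathbb N\cup\{\varepsilon\}$ is the commutative monoid extending the additive monoid $\mathbb N$ of nonnegative integers by a new element $\varepsilon$ with $0+\varepsilon=\varepsilon+0=\varepsilon+\varepsilon=\varepsilon$ and $n+\varepsilon=\varepsilon+n=n$ for all integers $n\ge1$. For a totally ordered countable set $Y$ of commuting variables, an $\tilde{\mathbb N}$-exponent monomial is a formal product $\prod_{y\in Y}y^{f(y)}$ with $f:Y\to\tilde{\mathbb N}$ of finite support ($y^0=1$); monomials multiply by adding exponents pointwise in $\tilde{\mathbb N}$, and $\mathbf{k}[[Y]]_{\tilde{\mathbb N}}$ is the algebra of possibly infinite $\mathbf{k}$-linear combinations of such monomials with the bilinearly extended product (well defined since each element of $\tilde{\mathbb N}$ is a sum of two elements in only finitely many ways). An $\tilde{\mathbb N}$-composition is a finite (possibly empty) sequence of elements of $\tilde{\mathbb N}\setminus\{0\}=\{\varepsilon,1,2,\dots\}$. For $X=\{x_1<x_2<\cdots\}$ and an $\tilde{\mathbb N}$-composition $\alpha=(\alpha_1,\dots,\alpha_k)$, $M_\alpha=\sum_{1\le i_1<\cdots<i_k}x_{i_1}^{\alpha_1}\cdots x_{i_k}^{\alpha_k}\in\mathbf{k}[[X]]_{\tilde{\mathbb N}}\subseteq \mathbf{k}[[\bar X]]_{\tilde{\mathbb N}}$, $M_\emptyset=1$; $\mathrm{WCQSym}$ is the $\mathbf{k}$-span of all $M_\alpha$. The quasi-shuffle product $*$ on the free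 $\mathbf{k}$-module on $\tilde{\mathbb N}$-compositions is the bilinear product with $\emptyset*\alpha=\alpha*\emptyset=\alpha$ and $(a,\alpha)*(b,\beta)=(a,\alpha*(b,\beta))+(b,(a,\alpha)*\beta)+(a+b,\alpha*\beta)$ for $a,b\in\tilde{\mathbb N}\setminus\{0\}$, where $(a,\cdot)$ (prepending $a$) is extended linearly. A Rota--Baxter algebra of weight $1$ is a commutative algebra $R$ with a $\mathbf{k}$-linear map $P:R\to R$ such that $P(x)P(y)=P(xP(y))+P(P(x)y)+P(xy)$ for all $x,y\in R$; morphisms are algebra homomorphisms commuting with the operators. *)

theory Defs
  imports "HOL-Library.Multiset"
begin

datatype ntil = Eps | N nat

fun nadd :: "ntil \<Rightarrow> ntil \<Rightarrow> ntil" where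
  "nadd Eps Eps = Eps"
| "nadd Eps (N n) = (if n = 0 then Eps else N n)"
| "nadd (N n) Eps = (if n = 0 then Eps else N n)"
| "nadd (N m) (N n) = N (m + n)"

definition is_comp :: "ntil list \<Rightarrow> bool" where
  "is_comp c \<longleftrightarrow> N 0 \<notin> set c"

definition is_ne_comp :: "ntil list \<Rightarrow> bool" where
  "is_ne_comp c \<longleftrightarrow> c \<noteq> [] \<and> is_comp c"

fun qsh :: "ntil list \<Rightarrow> ntil list \<Rightarrow> ntil list multiset" where
  "qsh [] b = {#b#}"
| "qsh (x # a) [] = {#x # a#}"
| "qsh (x # a) (y # b) =
     image_mset (Cons x) (qsh a (y # b)) + image_mset (Cons y) (qsh (x # a) b)
     + image_mset (Cons (nadd x y)) (qsh a b)"

fun barprod :: "ntil list \<Rightarrow> ntil list \<Rightarrow> ntil list multiset" where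
  "barprod (a0 # a) (b0 # b) = image_mset (Cons (nadd a0 b0)) (qsh a b)"
| "barprod _ _ = {#}"

text \<open>Elements are coefficient functions (composition \<Rightarrow> k) of finite support on
  nonempty compositions; the basis element Mbar_c is \<open>Mb c\<close>.\<close>

definition supp :: "(ntil list \<Rightarrow> 'k::zero) \<Rightarrow> ntil list set" where
  "supp f = {c. f c \<noteq> 0}"

definition WCQbar :: "(ntil list \<Rightarrow> 'k::comm_ring_1) set" where
  "WCQbar = {f. finite (supp f) \<and> (\<forall>c \<in> supp f. is_ne_comp c)}"

definition Mb :: "ntil list \<Rightarrow> ntil list \<Rightarrow> 'k::comm_ring_1" where
  "Mb c = (\<lambda>d. if d = c then 1 else 0)"

definition wadd :: "(ntil list \<Rightarrow> 'k::comm_ring_1) \<Rightarrow> (ntil list \<Rightarrow> 'k) \<Rightarrow> ntil list \<Rightarrow> 'k" where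
  "wadd f g = (\<lambda>c. f c + g c)"

definition wzero :: "ntil list \<Rightarrow> 'k::comm_ring_1" where
  "wzero = (\<lambda>c. 0)"

definition wsmult :: "'k::comm_ring_1 \<Rightarrow> (ntil list \<Rightarrow> 'k) \<Rightarrow> ntil list \<Rightarrow> 'k" where
  "wsmult a f = (\<lambda>c. a * f c)"

definition wmul :: "(ntil list \<Rightarrow> 'k::comm_ring_1) \<Rightarrow> (ntil list \<Rightarrow> 'k) \<Rightarrow> ntil list \<Rightarrow> 'k" where
  "wmul f g = (\<lambda>c. \<Sum>a\<in>supp f. \<Sum>b\<in>supp g. f a * g b * of_nat (count (barprod a b) c))"

definition wone :: "ntil list \<Rightarrow> 'k::comm_ring_1" where
  "wone = Mb [Eps]"

definition Pbar :: "(ntil list \<Rightarrow> 'k::comm_ring_1) \<Rightarrow> ntil list \<Rightarrow> 'k" where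
  "Pbar f = (\<lambda>c. \<Sum>a\<in>supp f. f a * Mb (Eps # a) c)"

definition x0 :: "ntil list \<Rightarrow> 'k::comm_ring_1" where
  "x0 = Mb [N 1]"

text \<open>(WCQbar, Pbar) is a commutative unitary k-algebra with a weight-1
  Rota--Baxter operator (additive group and module axioms are pointwise).\<close>
definition WCQbar_is_comm_RB_algebra :: "'k::comm_ring_1 itself \<Rightarrow> bool" where
  "WCQbar_is_comm_RB_algebra _ \<longleftrightarrow>
     (wzero :: ntil list \<Rightarrow> 'k) \<in> WCQbar \<and> (wone :: ntil list \<Rightarrow> 'k) \<in> WCQbar \<and>
     (\<forall>f\<in>(WCQbar :: (ntil list \<Rightarrow> 'k) set). \<forall>g\<in>WCQbar.
        wadd f g \<in> WCQbar \<and> wmul f g \<in> WCQbar) \<and>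
     (\<forall>a. \<forall>f\<in>(WCQbar :: (ntil list \<Rightarrow> 'k) set). wsmult a f \<in> WCQbar) \<and>
     (\<forall>f\<in>(WCQbar :: (ntil list \<Rightarrow> 'k) set). Pbar f \<in> WCQbar) \<and>
     (\<forall>f\<in>(WCQbar :: (ntil list \<Rightarrow> 'k) set). \<forall>g\<in>WCQbar. \<forall>h\<in>WCQbar.
        wmul (wmul f g) h = wmul f (wmul g h) \<and>
        wmul f (wadd g h) = wadd (wmul f g) (wmul f h)) \<and>
     (\<forall>f\<in>(WCQbar :: (ntil list \<Rightarrow> 'k) set). \<forall>g\<in>WCQbar.
        wmul f g = wmul g f) \<and>
     (\<forall>f\<in>(WCQbar :: (ntil list \<Rightarrow> 'k) set). wmul wone f = f) \<and>
     (\<forall>a. \<forall>f\<in>(WCQbar :: (ntil list \<Rightarrow> 'k) set). \<forall>g\<in>WCQbar.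
        wmul (wsmult a f) g = wsmult a (wmul f g)) \<and>
     (\<forall>f\<in>(WCQbar :: (ntil list \<Rightarrow> 'k) set). \<forall>g\<in>WCQbar.
        Pbar (wadd f g) = wadd (Pbar f) (Pbar g)) \<and>
     (\<forall>a. \<forall>f\<in>(WCQbar :: (ntil list \<Rightarrow> 'k) set). Pbar (wsmult a f) = wsmult a (Pbar f)) \<and>
     (\<forall>f\<in>(WCQbar :: (ntil list \<Rightarrow> 'k) set). \<forall>g\<in>WCQbar.
        wmul (Pbar f) (Pbar g) = wadd (wadd (Pbar (wmul f (Pbar g))) (Pbar (wmul (Pbar f) g))) (Pbar (wmul f g)))"

text \<open>A commutative unitary k-algebra R is a commutative ring (type class) together with
  a unital ring homomorphism phi : k \<rightarrow> R giving the scalar multiplication.\<close>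
definition is_k_algebra :: "('k::comm_ring_1 \<Rightarrow> 'r::comm_ring_1) \<Rightarrow> bool" where
  "is_k_algebra phi \<longleftrightarrow> phi 1 = 1 \<and> (\<forall>a b. phi (a + b) = phi a + phi b) \<and>
     (\<forall>a b. phi (a * b) = phi a * phi b)"

definition is_RB_operator :: "('k::comm_ring_1 \<Rightarrow> 'r::comm_ring_1) \<Rightarrow> ('r \<Rightarrow> 'r) \<Rightarrow> bool" where
  "is_RB_operator phi P \<longleftrightarrow>
     (\<forall>x y. P (x + y) = P x + P y) \<and> (\<forall>a x. P (phi a * x) = phi a * P x) \<and>
     (\<forall>x y. P x * P y = P (x * P y) + P (P x * y) + P (x * y))"

definition is_RB_hom :: "('k::comm_ring_1 \<Rightarrow> 'r::comm_ring_1) \<Rightarrow> ('r \<Rightarrow> 'r)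
    \<Rightarrow> ((ntil list \<Rightarrow> 'k) \<Rightarrow> 'r) \<Rightarrow> bool" where
  "is_RB_hom phi P h \<longleftrightarrow>
     h wone = 1 \<and>
     (\<forall>f\<in>WCQbar. \<forall>g\<in>WCQbar. h (wadd f g) = h f + h g \<and> h (wmul f g) = h f * h g) \<and>
     (\<forall>a. \<forall>f\<in>WCQbar. h (wsmult a f) = phi a * h f) \<and>
     (\<forall>f\<in>WCQbar. h (Pbar f) = P (h f))"

end

theory Submission
  imports Defs
begin


lemma nadd_comm: "nadd x y = nadd y x"
  by (cases x; cases y) auto

lemma nadd_assoc: "nadd (nadd x y) z = nadd x (nadd y z)"
  by (cases x; cases y; cases z) auto

lemma nadd_nz: "x \<noteq> N 0 \<Longrightarrow> y \<noteq> N 0 \<Longrightarrow> nadd x y \<noteq> N 0"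
  by (cases x; cases y) auto

lemma nadd_Eps: "x \<noteq> N 0 \<Longrightarrow> nadd x Eps = x"
  by (cases x) auto

lemma Eps_nadd: "x \<noteq> N 0 \<Longrightarrow> nadd Eps x = x"
  by (cases x) auto

lemma qsh_Nil2[simp]: "qsh a [] = {#a#}"
  by (cases a) auto

lemma qsh_comm: "qsh a b = qsh b a"
  by (induction a b rule: qsh.induct) (auto simp: nadd_comm ac_simps)

lemma nadd_nz': "nadd x y = N 0 \<Longrightarrow> x = N 0 \<or> y = N 0"
  by (cases x; cases y) (auto split: if_splits)

lemma qsh_comp: "c \<in># qsh a b \<Longrightarrow> N 0 \<notin> set a \<Longrightarrow> N 0 \<notin> set b \<Longrightarrow> N 0 \<notin> set c"
  by (induction a b arbitrary: c rule: qsh.induct) (auto, (metis nadd_nz')+)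

definition bindm :: "'a multiset \<Rightarrow> ('a \<Rightarrow> 'b multiset) \<Rightarrow> 'b multiset" where
  "bindm M F = sum_mset (image_mset F M)"

lemma bindm_simps[simp]:
  "bindm {#} F = {#}"
  "bindm (add_mset x M) F = F x + bindm M F"
  "bindm (M + M2) F = bindm M F + bindm M2 F"
  "bindm {#x#} F = F x"
  "bindm (image_mset g M) F = bindm M (\<lambda>x. F (g x))"
  by (auto simp: bindm_def image_mset.compositionality o_def)

lemma bindm_plus2: "bindm M (\<lambda>x. F x + G x) = bindm M F + bindm M G"
  by (induction M) auto

lemma bindm_image: "bindm M (\<lambda>x. image_mset f (F x)) = image_mset f (bindm M F)"
  by (induction M) auto

lemma bindm_empty[simp]: "bindm M (\<lambda>x. {#}) = {#}"
  by (induction M) auto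

lemma bindm_single: "bindm M (\<lambda>x. {#x#}) = M"
  by (induction M) auto

lemma bindL: "bindm (image_mset (Cons u) W) (\<lambda>v. qsh v (z#c')) =
   image_mset (Cons u) (bindm W (\<lambda>w. qsh w (z#c'))) + image_mset (Cons z) (bindm (image_mset (Cons u) W) (\<lambda>v. qsh v c'))
   + image_mset (Cons (nadd u z)) (bindm W (\<lambda>w. qsh w c'))"
  by (simp add: bindm_plus2 bindm_image del: qsh.simps(3)) (simp add: bindm_plus2 bindm_image)

lemma bindR: "bindm (image_mset (Cons u) W) (\<lambda>v. qsh (x#a') v) =
   image_mset (Cons x) (bindm (image_mset (Cons u) W) (\<lambda>v. qsh a' v)) + image_mset (Cons u) (bindm W (\<lambda>w. qsh (x#a') w))
   + image_mset (Cons (nadd x u)) (bindm W (\<lambda>w. qsh a' w))"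
  by (simp add: bindm_plus2 bindm_image del: qsh.simps(3)) (simp add: bindm_plus2 bindm_image)

lemma qsh_assoc_aux:
  "n = length a + length b + length c \<Longrightarrow>
   bindm (qsh a b) (\<lambda>x. qsh x c) = bindm (qsh b c) (\<lambda>y. qsh a y)"
proof (induction n arbitrary: a b c rule: less_induct)
  case (less n)
  show ?case
  proof (cases "a = [] \<or> b = [] \<or> c = []")
    case True
    then show ?thesis by (auto simp: bindm_single)
  next
    case False
    then obtain x a' y b' z c' where abc: "a = x # a'" "b = y # b'" "c = z # c'"
      by (meson list.exhaust)
    let ?L = "\<lambda>a b c. bindm (qsh a b) (\<lambda>x. qsh x c)"
    let ?R = "\<lambda>a b c. bindm (qsh b c) (\<lambda>y. qsh a y)"
    have IH: "?L a1 b1 c1 = ?R a1 b1 c1"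
      if "length a1 + length b1 + length c1 < n" for a1 b1 c1
      using less.IH that by blast
    have e1: "qsh (x#a') (y#b') = image_mset (Cons x) (qsh a' (y#b')) + image_mset (Cons y) (qsh (x#a') b') + image_mset (Cons (nadd x y)) (qsh a' b')"
      by simp
    have e2: "qsh (y#b') (z#c') = image_mset (Cons y) (qsh b' (z#c')) + image_mset (Cons z) (qsh (y#b') c') + image_mset (Cons (nadd y z)) (qsh b' c')"
      by simp
    have "?L a b c = bindm (image_mset (Cons x) (qsh a' (y#b')) + image_mset (Cons y) (qsh (x#a') b') + image_mset (Cons (nadd x y)) (qsh a' b')) (\<lambda>v. qsh v (z#c'))"
      unfolding abc e1 ..
    also have "\<dots> = 
        image_mset (Cons x) (?L a' b c) + image_mset (Cons y) (?L a b' c)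
      + image_mset (Cons (nadd x y)) (?L a' b' c) + image_mset (Cons z) (bindm (image_mset (Cons x) (qsh a' (y#b')) + image_mset (Cons y) (qsh (x#a') b') + image_mset (Cons (nadd x y)) (qsh a' b')) (\<lambda>v. qsh v c'))
      + image_mset (Cons (nadd x z)) (?L a' b c') + image_mset (Cons (nadd y z)) (?L a b' c')
      + image_mset (Cons (nadd (nadd x y) z)) (?L a' b' c')"
      unfolding abc bindm_simps(3) bindL image_mset_union by (simp add: ac_simps)
    also have "\<dots> = 
        image_mset (Cons x) (?L a' b c) + image_mset (Cons y) (?L a b' c)
      + image_mset (Cons (nadd x y)) (?L a' b' c) + image_mset (Cons z) (?L a b c')
      + image_mset (Cons (nadd x z)) (?L a' b c') + image_mset (Cons (nadd y z)) (?L a b' c')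
      + image_mset (Cons (nadd (nadd x y) z)) (?L a' b' c')"
      unfolding abc e1 ..
    finally have L: "?L a b c = \<dots>" .
    have "?R a b c = bindm (image_mset (Cons y) (qsh b' (z#c')) + image_mset (Cons z) (qsh (y#b') c') + image_mset (Cons (nadd y z)) (qsh b' c')) (\<lambda>v. qsh (x#a') v)"
      unfolding abc e2 ..
    also have "\<dots> = 
        image_mset (Cons x) (bindm (image_mset (Cons y) (qsh b' (z#c')) + image_mset (Cons z) (qsh (y#b') c') + image_mset (Cons (nadd y z)) (qsh b' c')) (\<lambda>v. qsh a' v))
      + image_mset (Cons y) (?R a b' c)
      + image_mset (Cons (nadd x y)) (?R a' b' c) + image_mset (Cons z) (?R a b c')
      + image_mset (Cons (nadd x z)) (?R a' b c') + image_mset (Cons (nadd y z)) (?R a b' c')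
      + image_mset (Cons (nadd x (nadd y z))) (?R a' b' c')"
      unfolding abc bindm_simps(3) bindR image_mset_union by (simp add: ac_simps)
    also have "\<dots> = 
        image_mset (Cons x) (?R a' b c) + image_mset (Cons y) (?R a b' c)
      + image_mset (Cons (nadd x y)) (?R a' b' c) + image_mset (Cons z) (?R a b c')
      + image_mset (Cons (nadd x z)) (?R a' b c') + image_mset (Cons (nadd y z)) (?R a b' c')
      + image_mset (Cons (nadd x (nadd y z))) (?R a' b' c')"
      unfolding abc e2 ..
    finally have R: "?R a b c = \<dots>" .
    have l: "length a' < length a" "length b' < length b" "length c' < length c"
      using abc by auto
    have i1: "?L a' b c = ?R a' b c" "?L a b' c = ?R a b' c" "?L a' b' c = ?R a' b' c"
      "?L a b c' = ?R a b c'" "?L a' b c' = ?R a' b c'" "?L a b' c' = ?R a b' c'"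
      "?L a' b' c' = ?R a' b' c'"
      by (rule IH; use l less.prems in simp)+
    show ?thesis unfolding L R nadd_assoc i1 ..
  qed
qed

lemma qsh_assoc: "bindm (qsh a b) (\<lambda>x. qsh x c) = bindm (qsh b c) (\<lambda>y. qsh a y)"
  using qsh_assoc_aux by blast

lemma barprod_Nil2[simp]: "barprod a [] = {#}"
  by (cases a) auto

lemma barprod_comm: "barprod a b = barprod b a"
  by (cases a; cases b) (auto simp: qsh_comm nadd_comm)

lemma barprod_assoc: "bindm (barprod a b) (\<lambda>d. barprod d c) = bindm (barprod b c) (\<lambda>d. barprod a d)"
proof (cases "a = [] \<or> b = [] \<or> c = []")
  case True
  then show ?thesis by auto
next
  case False
  then obtain x a' y b' z c' where abc: "a = x # a'" "b = y # b'" "c = z # c'"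
    by (meson list.exhaust)
  have "bindm (barprod a b) (\<lambda>d. barprod d c) = image_mset (Cons (nadd (nadd x y) z)) (bindm (qsh a' b') (\<lambda>w. qsh w c'))"
    by (simp add: abc bindm_image)
  moreover have "bindm (barprod b c) (\<lambda>d. barprod a d) = image_mset (Cons (nadd x (nadd y z))) (bindm (qsh b' c') (\<lambda>w. qsh a' w))"
    by (simp add: abc bindm_image)
  ultimately show ?thesis by (simp add: qsh_assoc nadd_assoc)
qed

lemma barprod_mem: assumes "c \<in># barprod a b" "is_comp a" "is_comp b" shows "is_ne_comp c"
  using assms
proof (cases a; cases b)
  fix x a' y b' assume ab: "a = x # a'" "b = y # b'" and m: "c \<in># barprod a b" and "is_comp a" "is_comp b"
  then obtain w where w: "c = nadd x y # w" "w \<in># qsh a' b'" by auto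
  have "N 0 \<notin> set w" using qsh_comp[OF w(2)] ab \<open>is_comp a\<close> \<open>is_comp b\<close> by (auto simp: is_comp_def)
  moreover have "nadd x y \<noteq> N 0" using nadd_nz ab \<open>is_comp a\<close> \<open>is_comp b\<close> by (auto simp: is_comp_def)
  ultimately show ?thesis using w by (auto simp: is_ne_comp_def is_comp_def)
qed (use assms in auto)

lemma barprod_unit: "is_ne_comp b \<Longrightarrow> barprod [Eps] b = {#b#}"
  by (cases b) (auto simp: is_ne_comp_def is_comp_def Eps_nadd)

lemma barprod_single_Eps: "a0 \<noteq> N 0 \<Longrightarrow> barprod [a0] (Eps # d) = {# a0 # d #}"
  by (simp add: nadd_Eps)

lemma barprod_x0: "barprod [N 1] [N n] = {#[N (Suc n)]#}"
  by simp

lemma qsh_RB: "is_ne_comp a \<Longrightarrow> is_ne_comp b \<Longrightarrow>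
  qsh a b = barprod a (Eps # b) + barprod (Eps # a) b + barprod a b"
  by (cases a; cases b) (auto simp: is_ne_comp_def is_comp_def nadd_Eps Eps_nadd)

lemma sum_supp_ext:
  assumes "finite S" "supp f \<subseteq> S" "\<And>a. f a = 0 \<Longrightarrow> H a = 0"
  shows "sum H (supp f) = sum H S"
  using assms by (intro sum.mono_neutral_left) (auto simp: supp_def)

lemma count_sum_gen:
  fixes F :: "'a \<Rightarrow> 'b::comm_semiring_1"
  assumes "finite D" "set_mset M \<subseteq> D"
  shows "(\<Sum>d\<in>D. of_nat (count M d) * F d) = sum_mset (image_mset F M)"
  using assms(2)
proof (induction M)
  case empty
  then show ?case by simp
next
  case (add x M)
  have "(\<Sum>d\<in>D. of_nat (count (add_mset x M) d) * F d)
      = (\<Sum>d\<in>D. of_nat (count M d) * F d) + (\<Sum>d\<in>D. (if d = x then F d else 0))"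
    by (simp add: sum.distrib[symmetric]) (intro sum.cong, auto simp: distrib_right add.commute)
  also have "(\<Sum>d\<in>D. (if d = x then F d else 0)) = F x"
    using add.prems assms(1) by (simp add: sum.delta)
  finally show ?case using add by (simp add: add.commute)
qed

lemma count_bindm: "count (bindm M G) c = sum_mset (image_mset (\<lambda>d. count (G d) c) M)"
  by (induction M) auto

lemma count_sum_bind:
  assumes "finite D" "set_mset M \<subseteq> D"
  shows "(\<Sum>d\<in>D. (of_nat (count M d) :: 'b::comm_semiring_1) * of_nat (count (G d) c)) = of_nat (count (bindm M G) c)"
  by (simp add: count_sum_gen[OF assms] count_bindm of_nat_sum_mset image_mset.compositionality o_def)

lemma sum4: fixes X :: "_ \<Rightarrow> _ \<Rightarrow> _ \<Rightarrow> 'k::comm_ring_1"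
  shows "(\<Sum>d\<in>D. \<Sum>b\<in>U. (\<Sum>a1\<in>S. \<Sum>a2\<in>T. X a1 a2 d) * Y d b) = (\<Sum>a1\<in>S. \<Sum>a2\<in>T. \<Sum>b\<in>U. \<Sum>d\<in>D. X a1 a2 d * Y d b)"
proof -
  have "(\<Sum>d\<in>D. \<Sum>b\<in>U. (\<Sum>a1\<in>S. \<Sum>a2\<in>T. X a1 a2 d) * Y d b) = (\<Sum>d\<in>D. \<Sum>b\<in>U. \<Sum>a1\<in>S. \<Sum>a2\<in>T. X a1 a2 d * Y d b)"
    by (simp add: sum_distrib_right)
  also have "\<dots> = (\<Sum>b\<in>U. \<Sum>d\<in>D. \<Sum>a1\<in>S. \<Sum>a2\<in>T. X a1 a2 d * Y d b)" by (rule sum.swap)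
  also have "\<dots> = (\<Sum>b\<in>U. \<Sum>a1\<in>S. \<Sum>d\<in>D. \<Sum>a2\<in>T. X a1 a2 d * Y d b)" by (intro sum.cong refl sum.swap)
  also have "\<dots> = (\<Sum>b\<in>U. \<Sum>a1\<in>S. \<Sum>a2\<in>T. \<Sum>d\<in>D. X a1 a2 d * Y d b)" by (intro sum.cong refl sum.swap)
  also have "\<dots> = (\<Sum>a1\<in>S. \<Sum>b\<in>U. \<Sum>a2\<in>T. \<Sum>d\<in>D. X a1 a2 d * Y d b)" by (rule sum.swap)
  also have "\<dots> = (\<Sum>a1\<in>S. \<Sum>a2\<in>T. \<Sum>b\<in>U. \<Sum>d\<in>D. X a1 a2 d * Y d b)" by (intro sum.cong refl sum.swap)
  finally show ?thesis .
qed

lemma sum4': fixes X :: "_ \<Rightarrow> _ \<Rightarrow> _ \<Rightarrow> 'k::comm_ring_1"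
  shows "(\<Sum>a1\<in>S. \<Sum>e\<in>E. f a1 * (\<Sum>a2\<in>T. \<Sum>b\<in>U. X a2 b e) * Y a1 e) = (\<Sum>a1\<in>S. \<Sum>a2\<in>T. \<Sum>b\<in>U. \<Sum>e\<in>E. f a1 * X a2 b e * Y a1 e)"
proof -
  have "(\<Sum>a1\<in>S. \<Sum>e\<in>E. f a1 * (\<Sum>a2\<in>T. \<Sum>b\<in>U. X a2 b e) * Y a1 e) = (\<Sum>a1\<in>S. \<Sum>e\<in>E. \<Sum>a2\<in>T. \<Sum>b\<in>U. f a1 * X a2 b e * Y a1 e)"
    by (simp add: sum_distrib_right sum_distrib_left)
  also have "\<dots> = (\<Sum>a1\<in>S. \<Sum>a2\<in>T. \<Sum>e\<in>E. \<Sum>b\<in>U. f a1 * X a2 b e * Y a1 e)" by (intro sum.cong refl sum.swap)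
  also have "\<dots> = (\<Sum>a1\<in>S. \<Sum>a2\<in>T. \<Sum>b\<in>U. \<Sum>e\<in>E. f a1 * X a2 b e * Y a1 e)" by (intro sum.cong refl sum.swap)
  finally show ?thesis .
qed

lemma WCQbar_iff: "f \<in> WCQbar \<longleftrightarrow> finite (supp f) \<and> (\<forall>c. f c \<noteq> 0 \<longrightarrow> is_ne_comp c)"
  by (auto simp: WCQbar_def supp_def)

lemma supp_iff: "c \<in> supp f \<longleftrightarrow> f c \<noteq> 0" by (simp add: supp_def)

lemma wadd_WCQ: "f \<in> WCQbar \<Longrightarrow> g \<in> WCQbar \<Longrightarrow> wadd f g \<in> WCQbar"
proof -
  assume a: "f \<in> WCQbar" "g \<in> WCQbar"
  have "supp (wadd f g) \<subseteq> supp f \<union> supp g" by (auto simp: supp_def wadd_def)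
  then show ?thesis using a unfolding WCQbar_def by (auto intro: finite_subset)
qed

lemma wsmult_WCQ: "f \<in> WCQbar \<Longrightarrow> wsmult a f \<in> WCQbar"
proof -
  assume a: "f \<in> WCQbar"
  have "supp (wsmult a f) \<subseteq> supp f" by (auto simp: supp_def wsmult_def)
  then show ?thesis using a unfolding WCQbar_def by (auto intro: finite_subset)
qed

lemma wzero_WCQ: "wzero \<in> WCQbar" by (simp add: WCQbar_iff wzero_def supp_def)

lemma supp_Mb: "supp (Mb c) \<subseteq> {c}" by (auto simp: supp_def Mb_def)

lemma Mb_WCQ: "is_ne_comp c \<Longrightarrow> Mb c \<in> WCQbar"
  using supp_Mb by (auto simp: WCQbar_iff Mb_def intro: finite_subset)

lemma wone_WCQ: "wone \<in> WCQbar"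
  unfolding wone_def by (rule Mb_WCQ) (simp add: is_ne_comp_def is_comp_def)

lemma wmul_ext:
  assumes "finite S" "supp f \<subseteq> S" "finite T" "supp g \<subseteq> T"
  shows "wmul f g c = (\<Sum>a\<in>S. \<Sum>b\<in>T. f a * g b * of_nat (count (barprod a b) c))"
proof -
  have "wmul f g c = (\<Sum>a\<in>S. \<Sum>b\<in>supp g. f a * g b * of_nat (count (barprod a b) c))"
    unfolding wmul_def by (rule sum_supp_ext[OF assms(1,2)]) simp
  also have "\<dots> = (\<Sum>a\<in>S. \<Sum>b\<in>T. f a * g b * of_nat (count (barprod a b) c))"
    by (intro sum.cong refl sum_supp_ext[OF assms(3,4)]) simp
  finally show ?thesis .
qed

definition Dset :: "ntil list set \<Rightarrow> ntil list set \<Rightarrow> ntil list set" where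
  "Dset S T = (\<Union>a\<in>S. \<Union>b\<in>T. set_mset (barprod a b))"

lemma finite_Dset: "finite S \<Longrightarrow> finite T \<Longrightarrow> finite (Dset S T)"
  by (simp add: Dset_def)

lemma supp_wmul:
  assumes "finite (supp f)" "finite (supp g)"
  shows "supp (wmul f g) \<subseteq> Dset (supp f) (supp g)"
proof
  fix c assume c: "c \<in> supp (wmul f g)"
  show "c \<in> Dset (supp f) (supp g)"
  proof (rule ccontr)
    assume "c \<notin> Dset (supp f) (supp g)"
    then have "\<forall>a\<in>supp f. \<forall>b\<in>supp g. count (barprod a b) c = 0"
      by (auto simp: Dset_def count_eq_zero_iff)
    then have "wmul f g c = 0" unfolding wmul_def by (simp add: not_in_iff)
    then show False using c by (simp add: supp_def)
  qed
qed

lemma wmul_WCQ: assumes "f \<in> WCQbar" "g \<in> WCQbar" shows "wmul f g \<in> WCQbar"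
proof -
  have fin: "finite (supp f)" "finite (supp g)" using assms by (auto simp: WCQbar_iff)
  have "\<forall>c\<in>Dset (supp f) (supp g). is_ne_comp c"
    using assms unfolding Dset_def WCQbar_def is_ne_comp_def
    by (auto dest!: barprod_mem simp: is_ne_comp_def)
  then show ?thesis using supp_wmul[OF fin] finite_Dset[OF fin]
    by (auto simp: WCQbar_def intro: finite_subset)
qed

lemma Pbar_eq:
  assumes "finite (supp f)"
  shows "Pbar f c = (case c of [] \<Rightarrow> 0 | x # a \<Rightarrow> if x = Eps then f a else 0)"
proof (cases "\<exists>a. c = Eps # a")
  case True
  then obtain a0 where c: "c = Eps # a0" by auto
  have "Pbar f c = (\<Sum>a\<in>supp f. if a = a0 then f a else 0)"
    unfolding Pbar_def Mb_def c by (intro sum.cong) auto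
  also have "\<dots> = f a0" using assms by (simp add: sum.delta' supp_def)
  finally show ?thesis using c by simp
next
  case False
  then have "Pbar f c = 0" unfolding Pbar_def Mb_def by (intro sum.neutral) auto
  then show ?thesis using False by (auto split: list.split)
qed

lemma supp_Pbar: "finite (supp f) \<Longrightarrow> supp (Pbar f) = Cons Eps ` supp f"
proof -
  assume fin: "finite (supp f)"
  show ?thesis
  proof (intro set_eqI iffI)
    fix c assume "c \<in> supp (Pbar f)"
    then show "c \<in> Cons Eps ` supp f" using fin
      by (cases c) (auto simp: supp_def Pbar_eq split: if_splits)
  qed (use fin in \<open>auto simp: supp_def Pbar_eq\<close>)
qed

lemma Pbar_WCQ: "f \<in> WCQbar \<Longrightarrow> Pbar f \<in> WCQbar"
  by (auto simp: WCQbar_def supp_Pbar is_ne_comp_def is_comp_def)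


lemma Dset_mem: "a \<in> S \<Longrightarrow> b \<in> T \<Longrightarrow> set_mset (barprod a b) \<subseteq> Dset S T"
  by (auto simp: Dset_def)

lemma fin_supp: "f \<in> WCQbar \<Longrightarrow> finite (supp f)" by (simp add: WCQbar_def)

lemma wmul_assoc:
  assumes f: "f \<in> WCQbar" and g: "g \<in> WCQbar" and h: "h \<in> WCQbar"
  shows "wmul (wmul f g) h = wmul f (wmul g h)"
proof
  fix c
  let ?S = "supp f" and ?T = "supp g" and ?U = "supp h"
  have fS: "finite ?S" "finite ?T" "finite ?U" using f g h by (auto simp: fin_supp)
  let ?D = "Dset ?S ?T" and ?E = "Dset ?T ?U"
  have fD: "finite ?D" "finite ?E" using fS by (auto intro: finite_Dset)
  let ?cnt = "\<lambda>a b c. (of_nat (count (barprod a b) c) :: 'a)"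
  have "wmul (wmul f g) h c = (\<Sum>d\<in>?D. \<Sum>b\<in>?U. wmul f g d * h b * ?cnt d b c)"
    by (rule wmul_ext[OF fD(1) supp_wmul[OF fS(1,2)] fS(3) order_refl])
  also have "\<dots> = (\<Sum>d\<in>?D. \<Sum>b\<in>?U. (\<Sum>a1\<in>?S. \<Sum>a2\<in>?T. f a1 * g a2 * ?cnt a1 a2 d) * (h b * ?cnt d b c))"
    by (simp add: wmul_ext[OF fS(1) order_refl fS(2) order_refl] mult.assoc)
  also have "\<dots> = (\<Sum>a1\<in>?S. \<Sum>a2\<in>?T. \<Sum>b\<in>?U. \<Sum>d\<in>?D. f a1 * g a2 * ?cnt a1 a2 d * (h b * ?cnt d b c))"
    by (rule sum4)
  also have "\<dots> = (\<Sum>a1\<in>?S. \<Sum>a2\<in>?T. \<Sum>b\<in>?U. f a1 * g a2 * h b * (\<Sum>d\<in>?D. ?cnt a1 a2 d * ?cnt d b c))"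
    by (simp add: sum_distrib_left ac_simps)
  also have "\<dots> = (\<Sum>a1\<in>?S. \<Sum>a2\<in>?T. \<Sum>b\<in>?U. f a1 * g a2 * h b * of_nat (count (bindm (barprod a1 a2) (\<lambda>d. barprod d b)) c))"
    by (intro sum.cong refl arg_cong2[where f="(*)"] count_sum_bind fD Dset_mem)
  also have "\<dots> = (\<Sum>a1\<in>?S. \<Sum>a2\<in>?T. \<Sum>b\<in>?U. f a1 * g a2 * h b * of_nat (count (bindm (barprod a2 b) (\<lambda>d. barprod a1 d)) c))"
    by (simp add: barprod_assoc)
  also have "\<dots> = (\<Sum>a1\<in>?S. \<Sum>a2\<in>?T. \<Sum>b\<in>?U. f a1 * g a2 * h b * (\<Sum>e\<in>?E. ?cnt a2 b e * ?cnt a1 e c))"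
    by (intro sum.cong refl arg_cong2[where f="(*)"] count_sum_bind[symmetric] fD Dset_mem)
  also have "\<dots> = (\<Sum>a1\<in>?S. \<Sum>a2\<in>?T. \<Sum>b\<in>?U. \<Sum>e\<in>?E. f a1 * (g a2 * h b * ?cnt a2 b e) * ?cnt a1 e c)"
    by (simp add: sum_distrib_left ac_simps)
  also have "\<dots> = (\<Sum>a1\<in>?S. \<Sum>e\<in>?E. f a1 * (\<Sum>a2\<in>?T. \<Sum>b\<in>?U. g a2 * h b * ?cnt a2 b e) * ?cnt a1 e c)"
    by (rule sum4'[symmetric])
  also have "\<dots> = wmul f (wmul g h) c"
    by (simp add: wmul_ext[OF fS(2) order_refl fS(3) order_refl]
                  wmul_ext[OF fS(1) order_refl fD(2) supp_wmul[OF fS(2,3)]])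
  finally show "wmul (wmul f g) h c = wmul f (wmul g h) c" .
qed

lemma wmul_comm:
  assumes f: "f \<in> WCQbar" and g: "g \<in> WCQbar"
  shows "wmul f g = wmul g f"
  unfolding wmul_def by (rule ext, subst sum.swap) (simp add: barprod_comm ac_simps)

lemma wmul_distrib:
  assumes f: "f \<in> WCQbar" and g: "g \<in> WCQbar" and h: "h \<in> WCQbar"
  shows "wmul f (wadd g h) = wadd (wmul f g) (wmul f h)"
proof
  fix c
  have fS: "finite (supp f)" "finite (supp g)" "finite (supp h)" using f g h by (auto simp: fin_supp)
  have s: "supp g \<subseteq> supp g \<union> supp h" "supp h \<subseteq> supp g \<union> supp h" "supp (wadd g h) \<subseteq> supp g \<union> supp h"
    by (auto simp: supp_def wadd_def)
  have fu: "finite (supp g \<union> supp h)" using fS by simp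
  show "wmul f (wadd g h) c = wadd (wmul f g) (wmul f h) c"
    unfolding wmul_ext[OF fS(1) order_refl fu s(1)] wmul_ext[OF fS(1) order_refl fu s(2)]
        wmul_ext[OF fS(1) order_refl fu s(3)]
    by (simp add: wadd_def sum.distrib[symmetric] algebra_simps)
qed

lemma wmul_wone:
  assumes f: "f \<in> WCQbar" shows "wmul wone f = f"
proof
  fix c
  have fS: "finite (supp f)" using f by (auto simp: fin_supp)
  have "wmul wone f c = (\<Sum>b\<in>supp f. (if b = c then f b else 0))"
    unfolding wone_def
    apply (simp add: wmul_ext[OF _ supp_Mb fS order_refl])
    apply (intro sum.cong refl)
    using f by (auto simp: Mb_def barprod_unit WCQbar_def)
  also have "\<dots> = f c" using fS by (simp add: sum.delta' supp_def)
  finally show "wmul wone f c = f c" .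
qed

lemma wmul_smult:
  assumes f: "f \<in> WCQbar" and g: "g \<in> WCQbar"
  shows "wmul (wsmult a f) g = wsmult a (wmul f g)"
proof
  fix c
  have fS: "finite (supp f)" "finite (supp g)" using f g by (auto simp: fin_supp)
  have s: "supp (wsmult a f) \<subseteq> supp f" by (auto simp: supp_def wsmult_def)
  show "wmul (wsmult a f) g c = wsmult a (wmul f g) c"
    unfolding wmul_ext[OF fS(1) s fS(2) order_refl] wmul_ext[OF fS(1) order_refl fS(2) order_refl]
    by (simp add: wsmult_def sum_distrib_left ac_simps)
qed

lemma Pbar_add:
  assumes f: "f \<in> WCQbar" and g: "g \<in> WCQbar"
  shows "Pbar (wadd f g) = wadd (Pbar f) (Pbar g)"
  using wadd_WCQ[OF f g] f g
  by (auto intro!: ext simp: Pbar_eq fin_supp wadd_def split: list.split)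

lemma Pbar_smult:
  assumes f: "f \<in> WCQbar"
  shows "Pbar (wsmult a f) = wsmult a (Pbar f)"
  using wsmult_WCQ[OF f] f
  by (auto intro!: ext simp: Pbar_eq fin_supp wsmult_def split: list.split)


lemma count_image_Cons: "count (image_mset (Cons x) M) (x # c) = count M c"
  by (induction M) auto

lemma count_image_Cons0: "\<not> (\<exists>c'. c = x # c') \<Longrightarrow> count (image_mset (Cons x) M) c = 0"
  by (induction M) auto

lemma sum_Eps_reindex:
  "finite T \<Longrightarrow> (\<Sum>b\<in>Cons Eps ` T. F b) = (\<Sum>b\<in>T. F (Eps # b))"
  by (subst sum.reindex) (auto simp: inj_on_def)

lemma wmul_Pbar_right:
  assumes f: "f \<in> WCQbar" and g: "g \<in> WCQbar"
  shows "wmul f (Pbar g) c = (\<Sum>a\<in>supp f. \<Sum>b\<in>supp g. f a * g b * of_nat (count (barprod a (Eps # b)) c))"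
proof -
  have fS: "finite (supp f)" "finite (supp g)" using f g by (auto simp: fin_supp)
  show ?thesis
    unfolding wmul_ext[OF fS(1) order_refl finite_imageI[OF fS(2)] supp_Pbar[OF fS(2), THEN equalityD1]]
    by (simp add: sum_Eps_reindex[OF fS(2)] Pbar_eq[OF fS(2)])
qed

lemma wmul_Pbar_left:
  assumes f: "f \<in> WCQbar" and g: "g \<in> WCQbar"
  shows "wmul (Pbar f) g c = (\<Sum>a\<in>supp f. \<Sum>b\<in>supp g. f a * g b * of_nat (count (barprod (Eps # a) b) c))"
proof -
  have fS: "finite (supp f)" "finite (supp g)" using f g by (auto simp: fin_supp)
  show ?thesis
    unfolding wmul_ext[OF finite_imageI[OF fS(1)] supp_Pbar[OF fS(1), THEN equalityD1] fS(2) order_refl]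
    by (simp add: sum_Eps_reindex[OF fS(1)] Pbar_eq[OF fS(1)])
qed

lemma wmul_Pbar_both:
  assumes f: "f \<in> WCQbar" and g: "g \<in> WCQbar"
  shows "wmul (Pbar f) (Pbar g) c = (\<Sum>a\<in>supp f. \<Sum>b\<in>supp g. f a * g b * of_nat (count (barprod (Eps # a) (Eps # b)) c))"
proof -
  have fS: "finite (supp f)" "finite (supp g)" using f g by (auto simp: fin_supp)
  show ?thesis
    unfolding wmul_ext[OF finite_imageI[OF fS(1)] supp_Pbar[OF fS(1), THEN equalityD1] 
       finite_imageI[OF fS(2)] supp_Pbar[OF fS(2), THEN equalityD1]]
    by (simp add: sum_Eps_reindex[OF fS(1)] sum_Eps_reindex[OF fS(2)] Pbar_eq[OF fS(1)] Pbar_eq[OF fS(2)])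
qed

lemma Pbar_RB:
  assumes f: "f \<in> WCQbar" and g: "g \<in> WCQbar"
  shows "wmul (Pbar f) (Pbar g) = wadd (wadd (Pbar (wmul f (Pbar g))) (Pbar (wmul (Pbar f) g))) (Pbar (wmul f g))"
proof
  fix c
  have fS: "finite (supp f)" "finite (supp g)" using f g by (auto simp: fin_supp)
  have W: "wmul f (Pbar g) \<in> WCQbar" "wmul (Pbar f) g \<in> WCQbar" "wmul f g \<in> WCQbar"
    using f g by (auto intro: wmul_WCQ Pbar_WCQ)
  have ne: "is_ne_comp a" if "a \<in> supp f" for a using f that by (auto simp: WCQbar_def)
  have ne2: "is_ne_comp b" if "b \<in> supp g" for b using g that by (auto simp: WCQbar_def)
  show "wmul (Pbar f) (Pbar g) c = wadd (wadd (Pbar (wmul f (Pbar g))) (Pbar (wmul (Pbar f) g))) (Pbar (wmul f g)) c"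
  proof (cases "\<exists>c'. c = Eps # c'")
    case True
    then obtain c' where c: "c = Eps # c'" by auto
    have "wmul (Pbar f) (Pbar g) c = (\<Sum>a\<in>supp f. \<Sum>b\<in>supp g. f a * g b * of_nat (count (qsh a b) c'))"
      unfolding wmul_Pbar_both[OF f g] c
      by (simp add: count_image_Cons)
    also have "\<dots> = (\<Sum>a\<in>supp f. \<Sum>b\<in>supp g. f a * g b * of_nat (count (barprod a (Eps # b)) c')
        + f a * g b * of_nat (count (barprod (Eps # a) b) c') + f a * g b * of_nat (count (barprod a b) c'))"
      by (intro sum.cong refl) (simp add: qsh_RB ne ne2 algebra_simps)
    also have "\<dots> = wadd (wadd (Pbar (wmul f (Pbar g))) (Pbar (wmul (Pbar f) g))) (Pbar (wmul f g)) c"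
      unfolding wadd_def c Pbar_eq[OF fin_supp[OF W(1)]] Pbar_eq[OF fin_supp[OF W(2)]] Pbar_eq[OF fin_supp[OF W(3)]]
      by (simp add: wmul_Pbar_left[OF f g] wmul_Pbar_right[OF f g] 
          wmul_ext[OF fS(1) order_refl fS(2) order_refl] sum.distrib)
    finally show ?thesis .
  next
    case False
    then have "\<forall>a b. count (barprod (Eps # a) (Eps # b)) c = 0"
      by (simp add: count_image_Cons0)
    then have "wmul (Pbar f) (Pbar g) c = 0" unfolding wmul_Pbar_both[OF f g] by simp
    moreover have "wadd (wadd (Pbar (wmul f (Pbar g))) (Pbar (wmul (Pbar f) g))) (Pbar (wmul f g)) c = 0"
      unfolding wadd_def Pbar_eq[OF fin_supp[OF W(1)]] Pbar_eq[OF fin_supp[OF W(2)]] Pbar_eq[OF fin_supp[OF W(3)]]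
      using False by (auto split: list.split)
    ultimately show ?thesis by simp
  qed
qed


fun pw :: "'r::comm_ring_1 \<Rightarrow> ntil \<Rightarrow> 'r" where
  "pw r Eps = 1" | "pw r (N n) = r ^ n"

fun tw :: "'r::comm_ring_1 \<Rightarrow> ('r \<Rightarrow> 'r) \<Rightarrow> ntil list \<Rightarrow> 'r" where
  "tw r P [] = 1" | "tw r P (x # xs) = P (pw r x * tw r P xs)"

fun hb :: "'r::comm_ring_1 \<Rightarrow> ('r \<Rightarrow> 'r) \<Rightarrow> ntil list \<Rightarrow> 'r" where
  "hb r P [] = 0" | "hb r P (x # xs) = pw r x * tw r P xs"

definition hh :: "('k::comm_ring_1 \<Rightarrow> 'r::comm_ring_1) \<Rightarrow> 'r \<Rightarrow> ('r \<Rightarrow> 'r) \<Rightarrow> (ntil list \<Rightarrow> 'k) \<Rightarrow> 'r" where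
  "hh phi r P f = (\<Sum>c\<in>supp f. phi (f c) * hb r P c)"

lemma pw_nadd: "pw r (nadd x y) = pw r x * pw r y"
  by (cases x; cases y) (auto simp: power_add)

lemma sum_mset_mult_left: "sum_mset (image_mset (\<lambda>x. (c::'a::comm_semiring_1) * F x) M) = c * sum_mset (image_mset F M)"
  by (induction M) (simp_all add: algebra_simps)

context
  fixes phi :: "'k::comm_ring_1 \<Rightarrow> 'r::comm_ring_1" and P :: "'r \<Rightarrow> 'r" and r :: 'r
  assumes alg: "is_k_algebra phi" and RB: "is_RB_operator phi P"
begin

lemma phi_add: "phi (a + b) = phi a + phi b" using alg by (simp add: is_k_algebra_def)
lemma phi_mult: "phi (a * b) = phi a * phi b" using alg by (simp add: is_k_algebra_def)
lemma phi_1: "phi 1 = 1" using alg by (simp add: is_k_algebra_def)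
lemma phi_0: "phi 0 = 0" using phi_add[of 0 0] by simp
lemma phi_of_nat: "phi (of_nat n) = of_nat n"
  by (induction n) (simp_all add: phi_0 phi_add phi_1)
lemma phi_sum: "phi (sum F A) = (\<Sum>a\<in>A. phi (F a))"
  by (induction A rule: infinite_finite_induct) (simp_all add: phi_0 phi_add)

lemma P_add: "P (x + y) = P x + P y" using RB by (simp add: is_RB_operator_def)
lemma P_phi: "P (phi a * x) = phi a * P x" using RB by (simp add: is_RB_operator_def)
lemma P_RB: "P x * P y = P (x * P y) + P (P x * y) + P (x * y)" using RB by (simp add: is_RB_operator_def)
lemma P_0: "P 0 = 0" using P_add[of 0 0] by simp
lemma P_sum: "P (sum F A) = (\<Sum>a\<in>A. P (F a))"
  by (induction A rule: infinite_finite_induct) (simp_all add: P_0 P_add)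
lemma P_sum_mset: "P (sum_mset (image_mset F M)) = sum_mset (image_mset (\<lambda>x. P (F x)) M)"
  by (induction M) (simp_all add: P_0 P_add)


lemma tw_qsh: "sum_mset (image_mset (tw r P) (qsh a b)) = tw r P a * tw r P b"
proof (induction a b rule: qsh.induct)
  case (1 b)
  then show ?case by simp
next
  case (2 x a)
  then show ?case by simp
next
  case (3 x a y b)
  let ?u = "pw r x * tw r P a" and ?v = "pw r y * tw r P b"
  have "sum_mset (image_mset (tw r P) (qsh (x # a) (y # b))) =
     P (pw r x * sum_mset (image_mset (tw r P) (qsh a (y # b))))
   + P (pw r y * sum_mset (image_mset (tw r P) (qsh (x # a) b)))
   + P (pw r (nadd x y) * sum_mset (image_mset (tw r P) (qsh a b)))"
    by (simp add: image_mset.compositionality o_def P_sum_mset sum_mset_mult_left[symmetric])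
  also have "\<dots> = P (?u * P ?v) + P (P ?u * ?v) + P (?u * ?v)"
    using 3 by (simp add: pw_nadd ac_simps)
  also have "\<dots> = tw r P (x # a) * tw r P (y # b)" by (simp add: P_RB)
  finally show ?case .
qed

lemma hb_barprod: "a \<noteq> [] \<Longrightarrow> b \<noteq> [] \<Longrightarrow>
   sum_mset (image_mset (hb r P) (barprod a b)) = hb r P a * hb r P b"
  by (cases a; cases b)
     (auto simp: image_mset.compositionality o_def sum_mset_mult_left tw_qsh pw_nadd ac_simps)

lemma hh_ext: "finite S \<Longrightarrow> supp f \<subseteq> S \<Longrightarrow> hh phi r P f = (\<Sum>c\<in>S. phi (f c) * hb r P c)"
  unfolding hh_def by (rule sum_supp_ext) (auto simp: phi_0)

lemma hh_wone: "hh phi r P wone = 1"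
  unfolding wone_def by (subst hh_ext[OF _ supp_Mb]) (auto simp: Mb_def phi_1)

lemma hh_x0: "hh phi r P x0 = r"
  unfolding x0_def by (subst hh_ext[OF _ supp_Mb]) (auto simp: Mb_def phi_1)

lemma hh_add: "f \<in> WCQbar \<Longrightarrow> g \<in> WCQbar \<Longrightarrow> hh phi r P (wadd f g) = hh phi r P f + hh phi r P g"
proof -
  assume f: "f \<in> WCQbar" and g: "g \<in> WCQbar"
  have fu: "finite (supp f \<union> supp g)" using f g by (simp add: fin_supp)
  have s: "supp f \<subseteq> supp f \<union> supp g" "supp g \<subseteq> supp f \<union> supp g" "supp (wadd f g) \<subseteq> supp f \<union> supp g"
    by (auto simp: supp_def wadd_def)
  show ?thesis unfolding hh_ext[OF fu s(1)] hh_ext[OF fu s(2)] hh_ext[OF fu s(3)]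
    by (simp add: wadd_def phi_add sum.distrib algebra_simps)
qed

lemma hh_smult: "f \<in> WCQbar \<Longrightarrow> hh phi r P (wsmult a f) = phi a * hh phi r P f"
proof -
  assume f: "f \<in> WCQbar"
  have s: "supp (wsmult a f) \<subseteq> supp f" by (auto simp: supp_def wsmult_def)
  show ?thesis unfolding hh_ext[OF fin_supp[OF f] s] hh_ext[OF fin_supp[OF f] order_refl]
    by (simp add: wsmult_def phi_mult sum_distrib_left ac_simps)
qed

lemma hh_mult: assumes f: "f \<in> WCQbar" and g: "g \<in> WCQbar"
  shows "hh phi r P (wmul f g) = hh phi r P f * hh phi r P g"
proof -
  have fS: "finite (supp f)" "finite (supp g)" using f g by (auto simp: fin_supp)
  let ?D = "Dset (supp f) (supp g)"
  have fD: "finite ?D" using fS by (rule finite_Dset)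
  have ne: "a \<noteq> []" if "a \<in> supp f" for a using f that by (auto simp: WCQbar_def is_ne_comp_def)
  have ne2: "b \<noteq> []" if "b \<in> supp g" for b using g that by (auto simp: WCQbar_def is_ne_comp_def)
  have "hh phi r P (wmul f g) = (\<Sum>c\<in>?D. phi (wmul f g c) * hb r P c)"
    by (rule hh_ext[OF fD supp_wmul[OF fS]])
  also have "\<dots> = (\<Sum>c\<in>?D. \<Sum>a\<in>supp f. \<Sum>b\<in>supp g. phi (f a) * phi (g b) * (of_nat (count (barprod a b) c) * hb r P c))"
    unfolding wmul_ext[OF fS(1) order_refl fS(2) order_refl]
    by (simp add: phi_sum phi_mult phi_of_nat sum_distrib_left sum_distrib_right ac_simps)
  also have "\<dots> = (\<Sum>a\<in>supp f. \<Sum>c\<in>?D. \<Sum>b\<in>supp g. phi (f a) * phi (g b) * (of_nat (count (barprod a b) c) * hb r P c))"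
    by (rule sum.swap)
  also have "\<dots> = (\<Sum>a\<in>supp f. \<Sum>b\<in>supp g. \<Sum>c\<in>?D. phi (f a) * phi (g b) * (of_nat (count (barprod a b) c) * hb r P c))"
    by (intro sum.cong refl sum.swap)
  also have "\<dots> = (\<Sum>a\<in>supp f. \<Sum>b\<in>supp g. phi (f a) * phi (g b) * (hb r P a * hb r P b))"
    apply (intro sum.cong refl)
    apply (subst sum_distrib_left[symmetric])
    apply (subst count_sum_gen[OF fD Dset_mem], assumption+)
    by (simp add: hb_barprod ne ne2)
  also have "\<dots> = hh phi r P f * hh phi r P g"
    unfolding hh_def sum_product by (simp add: ac_simps)
  finally show ?thesis .
qed

lemma hh_Pbar: assumes f: "f \<in> WCQbar" shows "hh phi r P (Pbar f) = P (hh phi r P f)"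
proof -
  have fS: "finite (supp f)" using f by (simp add: fin_supp)
  have ne: "a \<noteq> []" if "a \<in> supp f" for a using f that by (auto simp: WCQbar_def is_ne_comp_def)
  have hbE: "tw r P a = P (hb r P a)" if "a \<noteq> []" for a
    using that by (cases a) auto
  have "hh phi r P (Pbar f) = (\<Sum>a\<in>supp f. phi (f a) * P (hb r P a))"
    unfolding hh_def supp_Pbar[OF fS] sum_Eps_reindex[OF fS]
    by (intro sum.cong refl) (simp add: Pbar_eq[OF fS] hbE ne)
  also have "\<dots> = P (hh phi r P f)" unfolding hh_def by (simp add: P_sum P_phi)
  finally show ?thesis .
qed

end

lemma wmul_Mb: "wmul (Mb a) (Mb b) = (\<lambda>c. of_nat (count (barprod a b) c))"
  by (rule ext, subst wmul_ext[OF _ supp_Mb _ supp_Mb]) (auto simp: Mb_def)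

lemma Pbar_Mb: "Pbar (Mb d) = Mb (Eps # d)"
proof -
  have "finite (supp (Mb d))" using supp_Mb finite_subset by blast
  show ?thesis
  proof
    fix c show "Pbar (Mb d) c = Mb (Eps # d) c"
      by (simp only: Pbar_eq[OF \<open>finite (supp (Mb d))\<close>]) (auto simp: Mb_def split: list.split)
  qed
qed

lemma Mb_single: "wmul (Mb [a0]) (Pbar (Mb d)) = Mb (a0 # d)" if "a0 \<noteq> N 0"
  unfolding Pbar_Mb wmul_Mb barprod_single_Eps[OF that] by (auto intro!: ext simp: Mb_def)

lemma Mb_N: "wmul x0 (Mb [N m]) = Mb [N (Suc m)]"
  unfolding x0_def wmul_Mb by (auto intro!: ext simp: Mb_def)

context
  fixes phi :: "'k::comm_ring_1 \<Rightarrow> 'r::comm_ring_1" and P :: "'r \<Rightarrow> 'r" and r :: 'r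
    and h' :: "(ntil list \<Rightarrow> 'k) \<Rightarrow> 'r"
  assumes alg: "is_k_algebra phi" and RB: "is_RB_operator phi P"
    and hom: "is_RB_hom phi P h'" and hx: "h' x0 = r"
begin

lemma h_add: "f \<in> WCQbar \<Longrightarrow> g \<in> WCQbar \<Longrightarrow> h' (wadd f g) = h' f + h' g"
  using hom by (simp add: is_RB_hom_def)
lemma h_mul: "f \<in> WCQbar \<Longrightarrow> g \<in> WCQbar \<Longrightarrow> h' (wmul f g) = h' f * h' g"
  using hom by (simp add: is_RB_hom_def)
lemma h_smult: "f \<in> WCQbar \<Longrightarrow> h' (wsmult a f) = phi a * h' f"
  using hom by (simp add: is_RB_hom_def)
lemma h_P: "f \<in> WCQbar \<Longrightarrow> h' (Pbar f) = P (h' f)"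
  using hom by (simp add: is_RB_hom_def)
lemma h_one: "h' wone = 1"
  using hom by (simp add: is_RB_hom_def)

lemma h_zero: "h' wzero = 0"
proof -
  have "wadd wzero wzero = (wzero :: ntil list \<Rightarrow> 'k)" by (simp add: wadd_def wzero_def)
  then have "h' wzero = h' wzero + h' wzero" using h_add[OF wzero_WCQ wzero_WCQ] by simp
  then show ?thesis by simp
qed

lemma Mb_N_WCQ: "Mb [N (Suc m)] \<in> WCQbar"
  by (rule Mb_WCQ) (simp add: is_ne_comp_def is_comp_def)

lemma h_N: "h' (Mb [N (Suc m)]) = r ^ Suc m"
proof (induction m)
  case 0
  then show ?case using hx by (simp add: x0_def)
next
  case (Suc m)
  have x0W: "x0 \<in> WCQbar" unfolding x0_def by (rule Mb_WCQ) (simp add: is_ne_comp_def is_comp_def)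
  have "h' (Mb [N (Suc (Suc m))]) = h' (wmul x0 (Mb [N (Suc m)]))" by (simp add: Mb_N)
  also have "\<dots> = r * r ^ Suc m" using h_mul[OF x0W Mb_N_WCQ] Suc hx by simp
  finally show ?case by simp
qed

lemma h_single: "a0 \<noteq> N 0 \<Longrightarrow> h' (Mb [a0]) = pw r a0"
proof (cases a0)
  case Eps
  then show ?thesis using h_one by (simp add: wone_def)
next
  case (N n)
  assume "a0 \<noteq> N 0"
  then obtain m where "n = Suc m" using N by (cases n) auto
  then show ?thesis using N h_N by simp
qed

lemma h_Mb: "is_ne_comp c \<Longrightarrow> h' (Mb c) = hb r P c"
proof (induction c rule: induct_list012)
  case 1
  then show ?case by (simp add: is_ne_comp_def)
next
  case (2 x)
  then show ?case using h_single by (simp add: is_ne_comp_def is_comp_def)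
next
  case (3 x y zs)
  have x: "x \<noteq> N 0" using 3(3) by (auto simp: is_ne_comp_def is_comp_def)
  have ne: "is_ne_comp (y # zs)" using 3 by (simp add: is_ne_comp_def is_comp_def)
  have W1: "Mb [x] \<in> WCQbar" using x by (intro Mb_WCQ) (simp add: is_ne_comp_def is_comp_def)
  have W2: "Mb (y # zs) \<in> WCQbar" using ne by (rule Mb_WCQ)
  have "h' (Mb (x # y # zs)) = h' (wmul (Mb [x]) (Pbar (Mb (y # zs))))" by (simp add: Mb_single x)
  also have "\<dots> = pw r x * P (hb r P (y # zs))"
    using h_mul[OF W1 Pbar_WCQ[OF W2]] h_P[OF W2] 3(2)[OF ne] h_single[OF x] by simp
  finally show ?case by simp
qed

lemma h_unique_aux:
  "finite S \<Longrightarrow> \<forall>f\<in>WCQbar. supp f \<subseteq> S \<longrightarrow> h' f = (\<Sum>c\<in>S. phi (f c) * hb r P c)"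
proof (induction S rule: finite_induct)
  case empty
  have "f = wzero" if "supp f \<subseteq> {}" for f :: "ntil list \<Rightarrow> 'k"
    using that by (auto intro!: ext simp: supp_def wzero_def)
  then show ?case using h_zero by auto
next
  case (insert c S)
  show ?case
  proof (intro ballI impI)
    fix f :: "ntil list \<Rightarrow> 'k" assume f: "f \<in> WCQbar" and s: "supp f \<subseteq> insert c S"
    let ?g = "f(c := 0)"
    have sg: "supp ?g \<subseteq> S" using s by (auto simp: supp_def)
    have gW: "?g \<in> WCQbar" using f unfolding WCQbar_def supp_def
      by (auto intro: finite_subset[of _ "{c. f c \<noteq> 0}"])
    have hg: "h' ?g = (\<Sum>d\<in>S. phi (?g d) * hb r P d)" using insert.IH gW sg by blast
    have sumg: "(\<Sum>d\<in>S. phi (?g d) * hb r P d) = (\<Sum>d\<in>S. phi (f d) * hb r P d)"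
      using insert.hyps by (intro sum.cong) auto
    show "h' f = (\<Sum>c\<in>insert c S. phi (f c) * hb r P c)"
    proof (cases "f c = 0")
      case True
      then have "?g = f" by auto
      then show ?thesis using hg sumg insert.hyps True by (simp add: phi_0[OF alg RB])
    next
      case False
      then have cne: "is_ne_comp c" using f by (auto simp: WCQbar_def supp_def)
      have MW: "Mb c \<in> WCQbar" using cne by (rule Mb_WCQ)
      have "f = wadd (wsmult (f c) (Mb c)) ?g"
        by (auto intro!: ext simp: wadd_def wsmult_def Mb_def)
      then have "h' f = phi (f c) * hb r P c + h' ?g"
        using h_add[OF wsmult_WCQ[OF MW] gW] h_smult[OF MW] h_Mb[OF cne] by metis
      then show ?thesis using hg sumg insert.hyps by simp
    qed
  qed
qed

lemma h_unique: "f \<in> WCQbar \<Longrightarrow> h' f = hh phi r P f"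
  using h_unique_aux[OF fin_supp] unfolding hh_def by blast

end

theorem theorem4p4:
  fixes phi :: "'k::comm_ring_1 \<Rightarrow> 'r::comm_ring_1"
    and P :: "'r \<Rightarrow> 'r" and r :: 'r
  assumes kQ: "\<forall>n::nat. n \<noteq> 0 \<longrightarrow> (\<exists>y::'k. of_nat n * y = 1)"
  shows "WCQbar_is_comm_RB_algebra TYPE('k)
    \<and> ((is_k_algebra phi \<and> is_RB_operator phi P) \<longrightarrow>
        (\<exists>h. is_RB_hom phi P h \<and> h x0 = r \<and>
           (\<forall>h'. is_RB_hom phi P h' \<and> h' x0 = r \<longrightarrow> (\<forall>f\<in>WCQbar. h' f = h f))))"
proof (intro conjI impI)
  show "WCQbar_is_comm_RB_algebra TYPE('k)"
    unfolding WCQbar_is_comm_RB_algebra_def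
    by (intro conjI ballI allI; (rule wmul_comm; assumption)?)
       (simp_all add: wzero_WCQ wone_WCQ wadd_WCQ wmul_WCQ wsmult_WCQ Pbar_WCQ wmul_assoc
        wmul_distrib wmul_wone wmul_smult Pbar_add Pbar_smult Pbar_RB)
next
  assume a: "is_k_algebra phi \<and> is_RB_operator phi P"
  then have alg: "is_k_algebra phi" and RB: "is_RB_operator phi P" by auto
  have hom: "is_RB_hom phi P (hh phi r P)"
    unfolding is_RB_hom_def
    using hh_wone[OF alg RB] hh_add[OF alg RB] hh_mult[OF alg RB] hh_smult[OF alg RB] hh_Pbar[OF alg RB]
    by blast
  show "\<exists>h. is_RB_hom phi P h \<and> h x0 = r \<and>
           (\<forall>h'. is_RB_hom phi P h' \<and> h' x0 = r \<longrightarrow> (\<forall>f\<in>WCQbar. h' f = h f))"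
    using hom hh_x0[OF alg RB] h_unique[OF alg RB] by blast
qed

end
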